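(* Let $n\ge 1$ and let $F(z)=\sum_{k=1}^\infty b_k z^k$ be an extremal function for the problem $$ M_n=\sup\Big\{ \sum_{k=1}^n k|c_k|^2 \,:\, \|f\|_{\mathcal{B}}\le 1,\ f(z)=\sum_{k=1}^\infty c_k z^k\Big\}, $$ i.e. $\|F\|_{\mathcal{B}}\le 1$ and $\sum_{k=1}^n k|b_k|^2=M_n$. Then $b_n b_{n+1}=0$, i.e. $b_n=0$ or $b_{n+1}=0$.
   Context: $\mathbb{D}$ is the open unit disc. The Bloch space $\mathcal{B}$ consists of analytic functions $f$ on $\mathbb{D}$ with finite norm $\|f\|_{\mathcal{B}}=|f(0)|+\sup_{z\in\mathbb{D}}(1-|z|^2)|f'(z)|$. *)

theory Defs
  imports "HOL-Complex_Analysis.Complex_Analysis"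
begin

text \<open>Bloch seminorm sup_{z in D} (1-|z|^2)|f'(z)|, taken in the extended reals
  so that it is meaningful also when unbounded.\<close>
definition bloch_seminorm :: "(complex \<Rightarrow> complex) \<Rightarrow> ereal" where
  "bloch_seminorm f = (SUP z\<in>ball 0 1. ereal ((1 - (cmod z)\<^sup>2) * cmod (deriv f z)))"

definition bloch_norm :: "(complex \<Rightarrow> complex) \<Rightarrow> ereal" where
  "bloch_norm f = ereal (cmod (f 0)) + bloch_seminorm f"

definition bloch_space :: "(complex \<Rightarrow> complex) set" where
  "bloch_space = {f. f holomorphic_on ball 0 1 \<and> bloch_norm f < \<infinity>}"

definition taylor_coeff :: "(complex \<Rightarrow> complex) \<Rightarrow> nat \<Rightarrow> complex" where
  "taylor_coeff f k = (deriv ^^ k) f 0 / of_nat (fact k)"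

text \<open>Admissible functions: f in the Bloch space, f(z) = sum_{k>=1} c_k z^k (i.e. f(0)=0),
  with Bloch norm at most 1.\<close>
definition bloch_admissible :: "(complex \<Rightarrow> complex) set" where
  "bloch_admissible = {f. f \<in> bloch_space \<and> f 0 = 0 \<and> bloch_norm f \<le> 1}"

definition coeff_energy :: "nat \<Rightarrow> (complex \<Rightarrow> complex) \<Rightarrow> real" where
  "coeff_energy n f = (\<Sum>k=1..n. real k * (cmod (taylor_coeff f k))\<^sup>2)"

definition M_bloch :: "nat \<Rightarrow> real" where
  "M_bloch n = Sup (coeff_energy n ` bloch_admissible)"

end

theory Submission
  imports Defs
begin


definition mob :: "complex \<Rightarrow> complex \<Rightarrow> complex" where
  "mob a z = (z + a) / (1 + cnj a * z)"

lemma mob_ident: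
  "(cmod (1 + cnj a * z))\<^sup>2 - (cmod (z + a))\<^sup>2 = (1 - (cmod a)\<^sup>2) * (1 - (cmod z)\<^sup>2)"
  by (simp only: cmod_power2) (simp add: power2_eq_square algebra_simps)

lemma mob_den_pos:
  assumes "cmod a < 1" "cmod z < 1"
  shows "cmod (1 + cnj a * z) > 0"
proof -
  have "cmod a * cmod z \<le> cmod a" using assms by (simp add: mult_left_le)
  then have "cmod (cnj a * z) < 1" using assms by (simp add: norm_mult)
  then have "1 + cnj a * z \<noteq> 0"
    by (metis add.inverse_unique norm_minus_cancel norm_one order_less_irrefl)
  then show ?thesis by simp
qed

lemma mob_norm:
  assumes "cmod a < 1" "cmod z < 1"
  shows "1 - (cmod (mob a z))\<^sup>2 = (1 - (cmod a)\<^sup>2) * (1 - (cmod z)\<^sup>2) / (cmod (1 + cnj a * z))\<^sup>2"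
proof -
  have p: "cmod (1 + cnj a * z) > 0" using mob_den_pos[OF assms] .
  have "(cmod (mob a z))\<^sup>2 = (cmod (z + a))\<^sup>2 / (cmod (1 + cnj a * z))\<^sup>2"
    by (simp add: mob_def norm_divide power_divide)
  then show ?thesis using p mob_ident[of a z] by (simp add: field_simps)
qed

lemma mob_in:
  assumes "cmod a < 1" "cmod z < 1"
  shows "cmod (mob a z) < 1"
proof -
  have p: "cmod (1 + cnj a * z) > 0" using mob_den_pos[OF assms] .
  have "(1 - (cmod a)\<^sup>2) * (1 - (cmod z)\<^sup>2) / (cmod (1 + cnj a * z))\<^sup>2 > 0"
    using assms p by (intro divide_pos_pos mult_pos_pos) (auto simp: abs_square_less_1)
  then have "(cmod (mob a z))\<^sup>2 < 1" using mob_norm[OF assms] by linarith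
  then show ?thesis by (simp add: abs_square_less_1)
qed

lemma mob_deriv:
  assumes "cmod a < 1" "cmod z < 1"
  shows "(mob a has_field_derivative (1 - (cmod a)\<^sup>2) / (1 + cnj a * z)\<^sup>2) (at z)"
proof -
  have nz: "1 + cnj a * z \<noteq> 0" using mob_den_pos[OF assms] by auto
  have D: "((\<lambda>z. (z + a) / (1 + cnj a * z)) has_field_derivative
     ((1 + 0) * (1 + cnj a * z) - (z + a) * (0 + cnj a * 1)) / (1 + cnj a * z)\<^sup>2) (at z)"
    using nz by (intro derivative_eq_intros) (auto simp: power2_eq_square)
  have E: "((1 + 0) * (1 + cnj a * z) - (z + a) * (0 + cnj a * 1)) = complex_of_real (1 - (cmod a)\<^sup>2)"
    using complex_norm_square[of a] by (simp add: algebra_simps)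
  have M: "mob a = (\<lambda>z. (z + a) / (1 + cnj a * z))" by (simp add: fun_eq_iff mob_def)
  show ?thesis using D unfolding E M .
qed

lemma adm_D:
  assumes "f \<in> bloch_admissible"
  shows "f holomorphic_on ball 0 1" "f 0 = 0"
    "\<And>z. cmod z < 1 \<Longrightarrow> (1 - (cmod z)\<^sup>2) * cmod (deriv f z) \<le> 1"
proof -
  show h: "f holomorphic_on ball 0 1" "f 0 = 0" using assms
    by (auto simp: bloch_admissible_def bloch_space_def)
  have "bloch_norm f \<le> 1" using assms by (auto simp: bloch_admissible_def)
  then have s: "bloch_seminorm f \<le> 1" using h(2) by (simp add: bloch_norm_def zero_ereal_def[symmetric])
  fix z :: complex assume "cmod z < 1"
  then have "ereal ((1 - (cmod z)\<^sup>2) * cmod (deriv f z)) \<le> bloch_seminorm f"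
    unfolding bloch_seminorm_def by (intro SUP_upper) auto
  then have "ereal ((1 - (cmod z)\<^sup>2) * cmod (deriv f z)) \<le> ereal 1"
    using s unfolding one_ereal_def by (rule order_trans)
  then show "(1 - (cmod z)\<^sup>2) * cmod (deriv f z) \<le> 1" by simp
qed

lemma adm_I:
  assumes "f holomorphic_on ball 0 1" "f 0 = 0"
    "\<And>z. cmod z < 1 \<Longrightarrow> (1 - (cmod z)\<^sup>2) * cmod (deriv f z) \<le> 1"
  shows "f \<in> bloch_admissible"
proof -
  have "bloch_seminorm f \<le> 1"
    unfolding bloch_seminorm_def using assms(3) by (intro SUP_least) auto
  then have "bloch_norm f \<le> 1" using assms(2) by (simp add: bloch_norm_def zero_ereal_def[symmetric])
  moreover then have "bloch_norm f < \<infinity>" by (rule order_le_less_trans) simp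
  ultimately show ?thesis using assms by (auto simp: bloch_admissible_def bloch_space_def)
qed

lemma mob_adm:
  assumes F: "F \<in> bloch_admissible" and a: "cmod a < 1"
  shows "(\<lambda>z. F (mob a z) - F a) \<in> bloch_admissible"
proof -
  note FD = adm_D[OF F]
  have Fd: "(F has_field_derivative deriv F w) (at w)" if "cmod w < 1" for w
    using FD(1) that by (intro holomorphic_derivI) auto
  have Gd: "((\<lambda>z. F (mob a z) - F a) has_field_derivative
      deriv F (mob a z) * ((1 - (cmod a)\<^sup>2) / (1 + cnj a * z)\<^sup>2)) (at z)" if z: "cmod z < 1" for z
  proof -
    have "((\<lambda>z. F (mob a z)) has_field_derivative
      deriv F (mob a z) * ((1 - (cmod a)\<^sup>2) / (1 + cnj a * z)\<^sup>2)) (at z)"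
      using DERIV_chain2[OF Fd[OF mob_in[OF a z]] mob_deriv[OF a z]] by simp
    then show ?thesis by (intro derivative_eq_intros) auto
  qed
  show ?thesis
  proof (rule adm_I)
    show "(\<lambda>z. F (mob a z) - F a) holomorphic_on ball 0 1"
      unfolding holomorphic_on_open[OF open_ball] using Gd mem_ball_0 by metis
    show "F (mob a 0) - F a = 0" by (simp add: mob_def)
    fix z :: complex assume z: "cmod z < 1"
    have dz: "deriv (\<lambda>z. F (mob a z) - F a) z = deriv F (mob a z) * ((1 - (cmod a)\<^sup>2) / (1 + cnj a * z)\<^sup>2)"
      using Gd[OF z] by (rule DERIV_imp_deriv)
    have p: "cmod (1 + cnj a * z) > 0" using mob_den_pos[OF a z] .
    have a1: "0 \<le> 1 - (cmod a)\<^sup>2" using a by (simp add: abs_square_le_1)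
    have n1: "cmod (1 - (complex_of_real (cmod a))\<^sup>2) = 1 - (cmod a)\<^sup>2"
    proof -
      have "(1 - (complex_of_real (cmod a))\<^sup>2) = complex_of_real (1 - (cmod a)\<^sup>2)" by simp
      then show ?thesis using a1 by (simp only: norm_of_real)
    qed
    have "(1 - (cmod z)\<^sup>2) * cmod (deriv (\<lambda>z. F (mob a z) - F a) z)
       = (1 - (cmod z)\<^sup>2) * ((1 - (cmod a)\<^sup>2) / (cmod (1 + cnj a * z))\<^sup>2) * cmod (deriv F (mob a z))"
      unfolding dz using a1 n1 by (simp add: norm_mult norm_divide norm_power)
    also have "\<dots> = (1 - (cmod (mob a z))\<^sup>2) * cmod (deriv F (mob a z))"
      using mob_norm[OF a z] by simp
    also have "\<dots> \<le> 1" using FD(3)[OF mob_in[OF a z]] .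
    finally show "(1 - (cmod z)\<^sup>2) * cmod (deriv (\<lambda>z. F (mob a z) - F a) z) \<le> 1" .
  qed
qed




lemma deriv_funpow_Suc: "(deriv ^^ Suc m) f = (deriv ^^ m) (deriv f)"
  by (simp add: funpow_Suc_right del: funpow.simps)

lemma coeff_bound:
  assumes f: "f \<in> bloch_admissible" and k: "k \<ge> 1"
  shows "cmod (taylor_coeff f k) \<le> 2 ^ k"
proof -
  note FD = adm_D[OF f]
  obtain m where m: "k = Suc m" using k by (cases k) auto
  have h1: "deriv f holomorphic_on ball 0 1" using holomorphic_deriv FD(1) by auto
  have hol: "deriv f holomorphic_on ball 0 (1/2)"
    using h1 by (rule holomorphic_on_subset) auto
  have cont: "continuous_on (cball 0 (1/2)) (deriv f)"
    using h1 by (rule continuous_on_subset[OF holomorphic_on_imp_continuous_on]) auto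
  have bnd: "cmod (deriv f x) \<le> 4/3" if "cmod (0 - x) = 1/2" for x
  proof -
    have x: "cmod x = 1/2" using that by simp
    have "(1 - (cmod x)\<^sup>2) * cmod (deriv f x) \<le> 1" using FD(3) x by simp
    then show ?thesis using x by (simp add: power2_eq_square)
  qed
  have "cmod ((deriv ^^ m) (deriv f) 0) \<le> fact m * (4/3) / (1/2)^m"
    using Cauchy_inequality[OF hol cont _ bnd] by simp
  then have c: "cmod ((deriv ^^ k) f 0) \<le> fact m * (4/3) * 2^m"
    unfolding m deriv_funpow_Suc by (simp add: power_divide)
  have "cmod (taylor_coeff f k) = cmod ((deriv ^^ k) f 0) / fact k"
    by (simp add: taylor_coeff_def norm_divide)
  also have "\<dots> \<le> fact m * (4/3) * 2^m / fact k"
    using c by (intro divide_right_mono) auto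
  also have "\<dots> \<le> fact k * 2 * 2^m / fact k"
    unfolding m by (intro divide_right_mono mult_right_mono) (auto simp: fact_mono)
  also have "\<dots> = 2^k" using m by simp
  finally show ?thesis .
qed

lemma energy_bound:
  assumes f: "f \<in> bloch_admissible"
  shows "coeff_energy n f \<le> (\<Sum>k=1..n. real k * 4 ^ k)"
  unfolding coeff_energy_def
proof (rule sum_mono)
  fix k assume "k \<in> {1..n}"
  then have "cmod (taylor_coeff f k) \<le> 2 ^ k" using coeff_bound[OF f] by auto
  then have "(cmod (taylor_coeff f k))\<^sup>2 \<le> (2 ^ k)\<^sup>2" by (intro power_mono) auto
  also have "(2 ^ k)\<^sup>2 = (4::real) ^ k" by (simp add: power_mult_distrib[symmetric] power2_eq_square)
  finally show "real k * (cmod (taylor_coeff f k))\<^sup>2 \<le> real k * 4 ^ k" by (intro mult_left_mono) auto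
qed

lemma energy_le_M:
  assumes f: "f \<in> bloch_admissible"
  shows "coeff_energy n f \<le> M_bloch n"
  unfolding M_bloch_def
  by (rule cSup_upper) (use f energy_bound in \<open>auto intro!: bdd_aboveI\<close>)




lemma deriv_sq_fun: "deriv (\<lambda>z::complex. z^2) = (\<lambda>z. 2 * z)"
  by (rule ext, rule DERIV_imp_deriv) (auto intro!: derivative_eq_intros)

lemma deriv_lin_fun: "deriv (\<lambda>z::complex. 2 * z) = (\<lambda>z. 2)"
  by (rule ext, rule DERIV_imp_deriv) (auto intro!: derivative_eq_intros)

lemma deriv_funpow_2: "(deriv ^^ 2) f = deriv (deriv f)"
  by (simp add: numeral_2_eq_2)

lemma higher_deriv_sq0: "(deriv ^^ i) (\<lambda>z::complex. z^2) 0 = (if i = 2 then 2 else 0)"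
proof -
  consider "i = 0" | "i = 1" | "i = 2" | j where "i = Suc (Suc (Suc j))"
    by (metis One_nat_def Suc_1 not0_implies_Suc)
  then show ?thesis
  proof cases
    case 4
    have e: "(deriv ^^ i) (\<lambda>z::complex. z^2) = (deriv ^^ j) (deriv (deriv (deriv (\<lambda>z::complex. z^2))))"
      unfolding 4 by (simp only: deriv_funpow_Suc)
    have d0: "deriv (\<lambda>z::complex. 2) = (\<lambda>z. 0)"
      by (rule ext, rule DERIV_imp_deriv) (auto intro!: derivative_eq_intros)
    show ?thesis unfolding e deriv_sq_fun deriv_lin_fun d0 using 4 by simp
  next
    case 3
    show ?thesis unfolding 3 deriv_funpow_2 deriv_sq_fun deriv_lin_fun by simp
  qed (auto simp: deriv_sq_fun deriv_lin_fun)
qed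

lemma choose2_real: "of_nat (n choose 2) * 2 = (of_nat (n * (n - 1)) :: complex)"
proof -
  have ev: "2 dvd n * (n - 1)" by (cases "even n") auto
  have "(n choose 2) * 2 = n * (n - 1)" using ev by (simp add: choose_two)
  then show ?thesis by (metis of_nat_mult of_nat_numeral)
qed

lemma P_higher:
  assumes F: "F holomorphic_on ball 0 1" and k: "k \<ge> 1"
  shows "(deriv ^^ k) (\<lambda>z. F z + \<alpha> * (deriv F z - deriv F 0) - \<beta> * (z^2 * deriv F z)) 0
    = (deriv ^^ k) F 0 + \<alpha> * (deriv ^^ Suc k) F 0 - \<beta> * (of_nat (k * (k - 1)) * (deriv ^^ (k - 1)) F 0)"
proof -
  have o: "open (ball (0::complex) 1)" by simp
  have z: "(0::complex) \<in> ball 0 1" by simp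
  have dF: "deriv F holomorphic_on ball 0 1" using holomorphic_deriv[OF F o] .
  have sqh: "(\<lambda>z::complex. z^2) holomorphic_on ball 0 1" by (intro holomorphic_intros)
  have h1: "(\<lambda>z. deriv F z - deriv F 0) holomorphic_on ball 0 1" using dF F by (auto intro!: holomorphic_intros)
  have h2: "(\<lambda>z. z^2 * deriv F z) holomorphic_on ball 0 1" using dF F by (auto intro!: holomorphic_intros)
  have "(deriv ^^ k) (\<lambda>z. F z + \<alpha> * (deriv F z - deriv F 0) - \<beta> * (z^2 * deriv F z)) 0
     = (deriv ^^ k) (\<lambda>z. F z + \<alpha> * (deriv F z - deriv F 0)) 0 - (deriv ^^ k) (\<lambda>z. \<beta> * (z^2 * deriv F z)) 0"
    using F h1 h2 by (intro higher_deriv_diff) (auto intro!: holomorphic_intros)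
  also have "(deriv ^^ k) (\<lambda>z. F z + \<alpha> * (deriv F z - deriv F 0)) 0
     = (deriv ^^ k) F 0 + (deriv ^^ k) (\<lambda>z. \<alpha> * (deriv F z - deriv F 0)) 0"
    using F h1 by (intro higher_deriv_add) (auto intro!: holomorphic_intros)
  also have "(deriv ^^ k) (\<lambda>z. \<alpha> * (deriv F z - deriv F 0)) 0 = \<alpha> * (deriv ^^ k) (\<lambda>z. deriv F z - deriv F 0) 0"
    using h1 by (intro higher_deriv_cmult) auto
  also have "(deriv ^^ k) (\<lambda>z. deriv F z - deriv F 0) 0 = (deriv ^^ k) (deriv F) 0 - (deriv ^^ k) (\<lambda>z. deriv F 0) 0"
    using dF by (intro higher_deriv_diff) (auto intro!: holomorphic_intros)
  also have "(deriv ^^ k) (\<lambda>z. deriv F 0) 0 = 0" using k by simp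
  also have "(deriv ^^ k) (deriv F) 0 = (deriv ^^ Suc k) F 0" by (simp only: deriv_funpow_Suc)
  also have "(deriv ^^ k) (\<lambda>z. \<beta> * (z^2 * deriv F z)) 0 = \<beta> * (deriv ^^ k) (\<lambda>z. z^2 * deriv F z) 0"
    using h2 by (intro higher_deriv_cmult) auto
  also have "(deriv ^^ k) (\<lambda>z. z^2 * deriv F z) 0 = (\<Sum>i = 0..k. of_nat (k choose i) * (deriv ^^ i) (\<lambda>z. z^2) 0 * (deriv ^^ (k-i)) (deriv F) 0)"
    using sqh dF by (intro higher_deriv_mult) auto
  also have "\<dots> = (\<Sum>i = 0..k. if i = 2 then of_nat (k choose 2) * 2 * (deriv ^^ (k-2)) (deriv F) 0 else 0)"
    by (intro sum.cong refl) (simp add: higher_deriv_sq0)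
  also have "\<dots> = of_nat (k * (k - 1)) * (deriv ^^ (k - 1)) F 0"
  proof (cases "k \<ge> 2")
    case True
    then have "k - 1 = Suc (k - 2)" by simp
    then have "(deriv ^^ (k-2)) (deriv F) 0 = (deriv ^^ (k - 1)) F 0" by (simp only: deriv_funpow_Suc)
    then show ?thesis using True by (simp add: sum.delta choose2_real)
  next
    case False
    then have "k = 1" using k by simp
    then show ?thesis by simp
  qed
  finally show ?thesis by simp
qed




definition Gf :: "(complex \<Rightarrow> complex) \<Rightarrow> complex \<Rightarrow> real \<Rightarrow> complex \<Rightarrow> complex" where
  "Gf F c t z = F (mob (of_real t * c) z) - F (of_real t * c)"

definition Pf :: "(complex \<Rightarrow> complex) \<Rightarrow> complex \<Rightarrow> real \<Rightarrow> complex \<Rightarrow> complex" where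
  "Pf F c t z = F z + (of_real t * c) * (deriv F z - deriv F 0) - (of_real t * cnj c) * (z^2 * deriv F z)"

lemma taylor1:
  assumes F: "F holomorphic_on ball 0 1"
    and B: "\<And>x. x \<in> cball 0 (3/4) \<Longrightarrow> cmod (deriv (deriv F) x) \<le> B"
    and w: "w \<in> cball 0 (3/4)" and z: "z \<in> cball 0 (3/4)"
  shows "cmod (F z - F w - deriv F w * (z - w)) \<le> B * (cmod (z - w))\<^sup>2"
proof -
  have sub: "cball (0::complex) (3/4) \<subseteq> ball 0 1" by (auto simp: subset_iff)
  have "cmod ((deriv ^^ 0) F z - (\<Sum>i\<le>1. (deriv ^^ i) F w * (z-w) ^ i / (fact i))) \<le> B * cmod(z - w)^(Suc 1) / fact 1"
  proof (rule complex_Taylor[of "cball 0 (3/4)"])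
    fix i :: nat and x assume x: "x \<in> cball (0::complex) (3/4)" and i: "i \<le> 1"
    have "(deriv ^^ i) F holomorphic_on ball 0 1" using F by (intro holomorphic_higher_deriv) auto
    then have "((deriv ^^ i) F has_field_derivative deriv ((deriv ^^ i) F) x) (at x within cball 0 (3/4))"
      using x sub by (intro holomorphic_derivI) auto
    then show "((deriv ^^ i) F has_field_derivative (deriv ^^ Suc i) F x) (at x within cball 0 (3/4))"
      by simp
  next
    fix x assume "x \<in> cball (0::complex) (3/4)"
    then show "cmod ((deriv ^^ Suc 1) F x) \<le> B" using B by (simp add: numeral_2_eq_2)
  qed (use w z in auto)
  then show ?thesis by (simp add: algebra_simps power2_eq_square)
qed

lemma pt_bound:
  assumes F: "F holomorphic_on ball 0 1" and F0: "F 0 = 0" and c: "cmod c = 1"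
    and t: "0 < t" "t \<le> 1/10" and z: "cmod z = 1/2"
    and B: "\<And>x. x \<in> cball 0 (3/4) \<Longrightarrow> cmod (deriv (deriv F) x) \<le> B"
    and B1: "\<And>x. x \<in> cball 0 (3/4) \<Longrightarrow> cmod (deriv F x) \<le> B1"
  shows "cmod (Gf F c t z - Pf F c t z) \<le> (5 * B + B1) * t^2"
proof -
  define a where "a = of_real t * c"
  define d where "d = 1 + cnj a * z"
  define u where "u = mob a z - z"
  define v where "v = a - cnj a * z^2"
  have na: "cmod a = t" using c t by (simp add: a_def norm_mult)
  have ncz: "cmod (cnj a * z) = t / 2" using na z by (simp add: norm_mult)
  have nd: "cmod d \<ge> 19/20"
  proof -
    have "1 \<le> cmod d + cmod (cnj a * z)" unfolding d_def
      by (metis add_diff_cancel norm_one norm_triangle_ineq4 add.commute diff_le_eq)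
    then show ?thesis using ncz t by simp
  qed
  have dnz: "d \<noteq> 0" using nd by auto
  have nv: "cmod v \<le> 5/4 * t"
  proof -
    have "cmod v \<le> cmod a + cmod (cnj a * z^2)" unfolding v_def by (rule norm_triangle_ineq4)
    also have "cmod (cnj a * z^2) = t / 4"
    proof -
      have "cmod (cnj a * z^2) = cmod a * (cmod z)^2" by (simp add: norm_mult norm_power)
      then show ?thesis using na z by (simp add: power2_eq_square)
    qed
    finally show ?thesis using na by simp
  qed
  have uv: "u = v / d" unfolding u_def v_def d_def mob_def using dnz[unfolded d_def]
    by (simp add: field_simps power2_eq_square)
  have nu: "cmod u \<le> 2 * t"
  proof -
    have "cmod u = cmod v / cmod d" by (simp add: uv norm_divide)
    also have "\<dots> \<le> (5/4 * t) / (19/20)" using nv nd t by (intro frac_le) auto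
    also have "\<dots> \<le> 2 * t" using t by simp
    finally show ?thesis .
  qed
  have uv2: "u - v = - (v * (cnj a * z)) / d" unfolding uv d_def using dnz[unfolded d_def]
    by (simp add: field_simps)
  have nuv: "cmod (u - v) \<le> t^2"
  proof -
    have "cmod (u - v) = cmod v * cmod (cnj a * z) / cmod d" by (simp add: uv2 norm_divide norm_mult)
    also have "\<dots> = cmod v * (t/2) / cmod d" by (simp only: ncz)
    also have "\<dots> \<le> (5/4 * t) * (t/2) / (19/20)" using nv nd t
      by (intro frac_le mult_right_mono) auto
    also have "\<dots> \<le> t^2" using t by (simp add: power2_eq_square)
    finally show ?thesis .
  qed
  have zS: "z \<in> cball 0 (3/4)" using z by simp
  have mS: "mob a z \<in> cball 0 (3/4)"
  proof -
    have "cmod (mob a z) \<le> cmod z + cmod u" unfolding u_def using norm_triangle_ineq[of z "mob a z - z"] by simp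
    then show ?thesis using z nu t by simp
  qed
  have aS: "a \<in> cball 0 (3/4)" using na t by simp
  have 0: "(0::complex) \<in> cball 0 (3/4)" by simp
  have T1: "cmod (F (mob a z) - F z - deriv F z * u) \<le> B * (2*t)^2"
  proof -
    have "cmod (F (mob a z) - F z - deriv F z * u) \<le> B * (cmod u)\<^sup>2"
      using taylor1[OF F B zS mS] by (simp add: u_def)
    also have "\<dots> \<le> B * (2*t)^2"
    proof -
      have "0 \<le> B" using B[OF 0] norm_ge_zero order_trans by blast
      moreover have "(cmod u)\<^sup>2 \<le> (2*t)^2" using nu by (intro power_mono) auto
      ultimately show ?thesis by (intro mult_left_mono)
    qed
    finally show ?thesis .
  qed
  have T2: "cmod (deriv F z * (u - v)) \<le> B1 * t^2"
    unfolding norm_mult using B1[OF zS] nuv by (intro mult_mono) (auto intro: order_trans[OF norm_ge_zero])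
  have T3: "cmod (F a - F 0 - deriv F 0 * (a - 0)) \<le> B * t^2"
    using taylor1[OF F B 0 aS] na by simp
  have eq: "Gf F c t z - Pf F c t z = (F (mob a z) - F z - deriv F z * u) + deriv F z * (u - v)
      - (F a - F 0 - deriv F 0 * (a - 0))"
  proof -
    have "cnj a = of_real t * cnj c" by (simp add: a_def)
    then show ?thesis
      unfolding Gf_def Pf_def a_def[symmetric] u_def v_def using F0 by (simp add: algebra_simps)
  qed
  have "cmod (Gf F c t z - Pf F c t z) \<le> cmod (F (mob a z) - F z - deriv F z * u) + cmod (deriv F z * (u - v))
      + cmod (F a - F 0 - deriv F 0 * (a - 0))"
    unfolding eq using norm_triangle_ineq4[of "(F (mob a z) - F z - deriv F z * u) + deriv F z * (u - v)" "F a - F 0 - deriv F 0 * (a - 0)"]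
      norm_triangle_ineq[of "F (mob a z) - F z - deriv F z * u" "deriv F z * (u - v)"] by linarith
  also have "\<dots> \<le> B * (2*t)^2 + B1 * t^2 + B * t^2" using T1 T2 T3 by linarith
  also have "\<dots> = (5 * B + B1) * t^2" by (simp add: algebra_simps power2_eq_square)
  finally show ?thesis .
qed




lemma Gf_eq: "Gf F c t = (\<lambda>z. F (mob (of_real t * c) z) - F (of_real t * c))"
  by (simp add: fun_eq_iff Gf_def)

lemma Pf_eq: "Pf F c t = (\<lambda>z. F z + (of_real t * c) * (deriv F z - deriv F 0) - (of_real t * cnj c) * (z^2 * deriv F z))"
  by (simp add: fun_eq_iff Pf_def)

lemma div_helper1: "(a::complex) \<noteq> 0 \<Longrightarrow> X / f = a * (X / (a * f))"
  by (cases "f = 0") (auto simp: field_simps)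

lemma div_helper2: "(a::complex) \<noteq> 0 \<Longrightarrow> (a * b) * Y / (a * f) = b * (Y / f)"
  by (cases "f = 0") (auto simp: field_simps)

lemma div_helper3: "(P::complex) = a + al * X - be * Y \<Longrightarrow> P / f = a / f + al * (X / f) - be * (Y / f)"
  by (simp add: diff_divide_distrib add_divide_distrib)

lemma P_coeff:
  assumes F: "F holomorphic_on ball 0 1" and k: "k = Suc m"
  shows "(deriv ^^ k) (Pf F c t) 0 / fact k = taylor_coeff F k + of_real t * (c * of_nat (k+1) * taylor_coeff F (k+1)
      - cnj c * of_nat (k-1) * taylor_coeff F (k-1))"
proof -
  have E1: "(deriv ^^ k) (Pf F c t) 0 = (deriv ^^ k) F 0 + (of_real t * c) * (deriv ^^ Suc k) F 0
     - (of_real t * cnj c) * (of_nat (k * (k - 1)) * (deriv ^^ (k - 1)) F 0)"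
    unfolding Pf_eq using P_higher[OF F, of k] k by simp
  have E2: "(deriv ^^ Suc k) F 0 / fact k = of_nat (k+1) * taylor_coeff F (k+1)"
  proof -
    have f: "(of_nat (fact (Suc k)) :: complex) = of_nat (Suc k) * fact k" by (simp only: fact_Suc of_nat_mult of_nat_fact of_nat_id)
    have nz: "(of_nat (Suc k) :: complex) \<noteq> 0" by (rule of_nat_neq_0)
    have nz2: "(fact k :: complex) \<noteq> 0" by simp
    show ?thesis unfolding taylor_coeff_def Suc_eq_plus1[symmetric] f by (rule div_helper1[OF nz])
  qed
  have E3: "of_nat (k * (k - 1)) * (deriv ^^ (k - 1)) F 0 / fact k = of_nat (k-1) * taylor_coeff F (k-1)"
  proof -
    have f: "(of_nat (fact (Suc m)) :: complex) = of_nat (Suc m) * fact m" by (simp only: fact_Suc of_nat_mult of_nat_fact of_nat_id)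
    have nz: "(of_nat (Suc m) :: complex) \<noteq> 0" by (rule of_nat_neq_0)
    have nz2: "(fact m :: complex) \<noteq> 0" by simp
    show ?thesis unfolding taylor_coeff_def k f of_nat_mult using div_helper2[OF nz] by simp
  qed
  have E4: "(deriv ^^ k) F 0 / fact k = taylor_coeff F k" by (simp add: taylor_coeff_def)
  show ?thesis unfolding div_helper3[OF E1] E2 E3 E4 by (simp add: algebra_simps)
qed




lemma coeff_approx:
  assumes F: "F \<in> bloch_admissible" and c: "cmod c = 1"
    and t: "0 < t" "t \<le> 1/10" and k: "1 \<le> k"
    and B: "\<And>x. x \<in> cball 0 (3/4) \<Longrightarrow> cmod (deriv (deriv F) x) \<le> B"
    and B1: "\<And>x. x \<in> cball 0 (3/4) \<Longrightarrow> cmod (deriv F x) \<le> B1"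
  shows "cmod (taylor_coeff (Gf F c t) k - (taylor_coeff F k + of_real t * (c * of_nat (k+1) * taylor_coeff F (k+1)
      - cnj c * of_nat (k-1) * taylor_coeff F (k-1)))) \<le> (5 * B + B1) * t^2 * 2^k"
proof -
  note FD = adm_D[OF F]
  obtain m where m: "k = Suc m" using k by (cases k) auto
  have na: "cmod (of_real t * c) < 1" using c t by (simp add: norm_mult)
  have hG: "Gf F c t holomorphic_on ball 0 1"
    unfolding Gf_eq using adm_D(1)[OF mob_adm[OF F na]] .
  have hP: "Pf F c t holomorphic_on ball 0 1"
    unfolding Pf_eq using FD(1) by (auto intro!: holomorphic_intros)
  define g where "g = (\<lambda>z. Gf F c t z - Pf F c t z)"
  have hg: "g holomorphic_on ball 0 1" unfolding g_def using hG hP by (intro holomorphic_intros)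
  have hg2: "g holomorphic_on ball 0 (1/2)" using hg by (rule holomorphic_on_subset) auto
  have cg: "continuous_on (cball 0 (1/2)) g"
    using hg by (rule continuous_on_subset[OF holomorphic_on_imp_continuous_on]) auto
  have bnd: "cmod (g x) \<le> (5 * B + B1) * t^2" if "cmod (0 - x) = 1/2" for x
    unfolding g_def using pt_bound[OF FD(1) FD(2) c t _ B B1] that by simp
  have "cmod ((deriv ^^ k) g 0) \<le> fact k * ((5 * B + B1) * t^2) / (1/2)^k"
    using Cauchy_inequality[OF hg2 cg _ bnd] by simp
  also have "\<dots> = fact k * ((5 * B + B1) * t^2 * 2^k)" by (simp add: power_divide)
  finally have cb: "cmod ((deriv ^^ k) g 0) \<le> fact k * ((5 * B + B1) * t^2 * 2^k)" .
  have dg: "(deriv ^^ k) g 0 = (deriv ^^ k) (Gf F c t) 0 - (deriv ^^ k) (Pf F c t) 0"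
    unfolding g_def using hG hP by (intro higher_deriv_diff) auto
  have "taylor_coeff (Gf F c t) k - (taylor_coeff F k + of_real t * (c * of_nat (k+1) * taylor_coeff F (k+1)
      - cnj c * of_nat (k-1) * taylor_coeff F (k-1))) = (deriv ^^ k) g 0 / fact k"
    unfolding P_coeff[OF FD(1) m, symmetric] dg by (simp add: taylor_coeff_def diff_divide_distrib)
  then have "cmod (taylor_coeff (Gf F c t) k - (taylor_coeff F k + of_real t * (c * of_nat (k+1) * taylor_coeff F (k+1)
      - cnj c * of_nat (k-1) * taylor_coeff F (k-1)))) = cmod ((deriv ^^ k) g 0) / fact k"
    by (simp add: norm_divide)
  also have "\<dots> \<le> (5 * B + B1) * t^2 * 2^k" using cb by (simp add: divide_simps mult.commute)
  finally show ?thesis .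
qed



lemma re_swap: "Re (cnj x * (cnj c * y)) = Re (c * cnj y * x)"
  by (simp add: algebra_simps)

lemma telesc:
  "(\<Sum>k=1..n. real k * Re (cnj (b k) * (c * of_nat (k+1) * b (k+1) - cnj c * of_nat (k-1) * b (k-1))))
    = real n * real (n+1) * Re (c * cnj (b n) * b (n+1))"
proof (induction n)
  case 0
  then show ?case by simp
next
  case (Suc n)
  have r: "Re (cnj (b (Suc n)) * (c * of_nat (Suc n + 1) * b (Suc n + 1))) = real (Suc n + 1) * Re (c * cnj (b (Suc n)) * b (Suc n + 1))"
    by (simp add: algebra_simps)
  have r2: "Re (cnj (b (Suc n)) * (cnj c * of_nat (Suc n - 1) * b (Suc n - 1))) = real n * Re (c * cnj (b n) * b (n + 1))"
    using re_swap[of "b (Suc n)" c "b n"] by (simp add: algebra_simps)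
  have "Re (cnj (b (Suc n)) * (c * of_nat (Suc n + 1) * b (Suc n + 1) - cnj c * of_nat (Suc n - 1) * b (Suc n - 1)))
     = real (Suc n + 1) * Re (c * cnj (b (Suc n)) * b (Suc n + 1)) - real n * Re (c * cnj (b n) * b (n + 1))"
    unfolding right_diff_distrib minus_complex.sel r r2 ..
  then show ?case using Suc by (simp add: algebra_simps)
qed

lemma sq_lower:
  assumes "y = x + of_real t * d + e"
  shows "(cmod y)\<^sup>2 - (cmod x)\<^sup>2 \<ge> 2 * t * Re (cnj x * d) - 2 * cmod x * cmod e"
proof -
  have id: "(cmod y)\<^sup>2 - (cmod x)\<^sup>2 - 2 * Re (cnj x * (y - x)) = (cmod (y - x))\<^sup>2"
    by (simp only: cmod_power2) (simp add: power2_eq_square algebra_simps)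
  have "Re (cnj x * e) \<ge> - (cmod x * cmod e)"
    using abs_Re_le_cmod[of "cnj x * e"] by (simp add: norm_mult)
  moreover have "Re (cnj x * (y - x)) = t * Re (cnj x * d) + Re (cnj x * e)"
    using assms by (simp add: algebra_simps)
  moreover have "(cmod (y - x))\<^sup>2 \<ge> 0" by simp
  ultimately show ?thesis using id by linarith
qed

lemma sum_lin:
  "(\<Sum>k\<in>A. real k * (2 * t * R k - 2 * q k * (K * t^2 * 2^k)))
    = 2 * t * (\<Sum>k\<in>A. real k * R k) - 2 * (\<Sum>k\<in>A. real k * q k * (K * 2^k)) * t^2"
proof -
  have e: "\<And>k. real k * (2 * t * R k - 2 * q k * (K * t^2 * 2^k)) = (2 * t) * (real k * R k) - (2 * t^2) * (real k * q k * (K * 2^k))"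
    by (simp add: algebra_simps)
  show ?thesis unfolding e sum_subtractf sum_distrib_left[symmetric] by (simp add: algebra_simps)
qed

theorem mainTheorem5:
  fixes n :: nat and F :: "complex \<Rightarrow> complex"
  assumes "n \<ge> 1"
    and "F \<in> bloch_admissible"
    and "coeff_energy n F = M_bloch n"
  shows "taylor_coeff F n * taylor_coeff F (n + 1) = 0"
proof (rule ccontr)
  assume nz: "taylor_coeff F n * taylor_coeff F (n + 1) \<noteq> 0"
  note F = assms(2)
  note FD = adm_D[OF F]
  define b where "b = taylor_coeff F"
  define w where "w = b n * cnj (b (n+1))"
  have wnz: "w \<noteq> 0" using nz by (simp add: w_def b_def)
  define c where "c = w / of_real (cmod w)"
  have c1: "cmod c = 1" using wnz by (simp add: c_def norm_divide)
  have cw: "c * cnj (b n) * b (n+1) = of_real (cmod w)"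
  proof -
    have "c * cnj (b n) * b (n+1) = w * cnj w / of_real (cmod w)"
      by (simp add: c_def w_def)
    also have "w * cnj w = (of_real (cmod w))\<^sup>2" using complex_norm_square[of w] by simp
    finally show ?thesis using wnz by (simp add: power2_eq_square)
  qed
  define L where "L = (\<Sum>k=1..n. real k * Re (cnj (b k) * (c * of_nat (k+1) * b (k+1) - cnj c * of_nat (k-1) * b (k-1))))"
  have Lpos: "L > 0" unfolding L_def telesc cw using wnz assms(1) by simp
  have hol: "F holomorphic_on ball 0 1" by (rule FD(1))
  have sub: "cball (0::complex) (3/4) \<subseteq> ball 0 1" by (auto simp: subset_iff)
  have h1: "deriv F holomorphic_on ball 0 1" using holomorphic_deriv hol by auto
  have h2: "deriv (deriv F) holomorphic_on ball 0 1" using holomorphic_deriv h1 by auto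
  have "compact (deriv (deriv F) ` cball 0 (3/4))"
    by (rule compact_continuous_image[OF continuous_on_subset[OF holomorphic_on_imp_continuous_on[OF h2] sub]]) simp
  then obtain B where B: "\<And>x. x \<in> cball 0 (3/4) \<Longrightarrow> cmod (deriv (deriv F) x) \<le> B"
    using compact_imp_bounded bounded_iff by (metis imageI)
  have "compact (deriv F ` cball 0 (3/4))"
    by (rule compact_continuous_image[OF continuous_on_subset[OF holomorphic_on_imp_continuous_on[OF h1] sub]]) simp
  then obtain B1 where B1: "\<And>x. x \<in> cball 0 (3/4) \<Longrightarrow> cmod (deriv F x) \<le> B1"
    using compact_imp_bounded bounded_iff by (metis imageI)
  have 0: "(0::complex) \<in> cball 0 (3/4)" by simp
  have Bnn: "B \<ge> 0" using B[OF 0] norm_ge_zero order_trans by blast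
  have B1nn: "B1 \<ge> 0" using B1[OF 0] norm_ge_zero order_trans by blast
  define K where "K = 5 * B + B1"
  have Knn: "K \<ge> 0" using Bnn B1nn by (simp add: K_def)
  define D where "D = 2 * (\<Sum>k=1..n. real k * cmod (b k) * (K * 2^k))"
  have Dnn: "D \<ge> 0" unfolding D_def using Knn by (auto intro!: sum_nonneg)
  define t where "t = min (1/10) (L / (D + 1))"
  have tpos: "t > 0" using Lpos Dnn by (simp add: t_def)
  have t10: "t \<le> 1/10" unfolding t_def by (rule min.cobounded1)
  have tL: "t \<le> L / (D + 1)" unfolding t_def by (rule min.cobounded2)
  define G where "G = Gf F c t"
  have na: "cmod (of_real t * c) < 1" using c1 tpos t10 by (simp add: norm_mult)
  have Gadm: "G \<in> bloch_admissible" unfolding G_def Gf_eq by (rule mob_adm[OF F na])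
  have EG: "coeff_energy n G \<le> coeff_energy n F" using energy_le_M[OF Gadm] assms(3) by simp
  have "coeff_energy n G - coeff_energy n F = (\<Sum>k=1..n. real k * ((cmod (taylor_coeff G k))\<^sup>2 - (cmod (b k))\<^sup>2))"
    unfolding coeff_energy_def b_def by (simp add: sum_subtractf right_diff_distrib)
  also have "\<dots> \<ge> (\<Sum>k=1..n. real k * (2 * t * Re (cnj (b k) * (c * of_nat (k+1) * b (k+1) - cnj c * of_nat (k-1) * b (k-1)))
        - 2 * cmod (b k) * (K * t^2 * 2^k)))"
  proof (rule sum_mono)
    fix k assume k: "k \<in> {1..n}"
    define e where "e = taylor_coeff G k - (b k + of_real t * (c * of_nat (k+1) * b (k+1) - cnj c * of_nat (k-1) * b (k-1)))"
    have ne: "cmod e \<le> K * t^2 * 2^k"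
      unfolding e_def G_def b_def K_def using coeff_approx[OF F c1 tpos t10 _ B B1, of k] k by simp
    have "(cmod (taylor_coeff G k))\<^sup>2 - (cmod (b k))\<^sup>2 \<ge>
        2 * t * Re (cnj (b k) * (c * of_nat (k+1) * b (k+1) - cnj c * of_nat (k-1) * b (k-1))) - 2 * cmod (b k) * cmod e"
      by (rule sq_lower) (simp add: e_def)
    moreover have "2 * cmod (b k) * cmod e \<le> 2 * cmod (b k) * (K * t^2 * 2^k)"
      using ne by (intro mult_left_mono) auto
    ultimately show "real k * (2 * t * Re (cnj (b k) * (c * of_nat (k+1) * b (k+1) - cnj c * of_nat (k-1) * b (k-1)))
        - 2 * cmod (b k) * (K * t^2 * 2^k)) \<le> real k * ((cmod (taylor_coeff G k))\<^sup>2 - (cmod (b k))\<^sup>2)"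
      by (intro mult_left_mono) auto
  qed
  also have "(\<Sum>k=1..n. real k * (2 * t * Re (cnj (b k) * (c * of_nat (k+1) * b (k+1) - cnj c * of_nat (k-1) * b (k-1)))
        - 2 * cmod (b k) * (K * t^2 * 2^k))) = 2 * t * L - D * t^2"
    unfolding L_def D_def by (rule sum_lin)
  finally have "2 * t * L - D * t^2 \<le> 0" using EG by linarith
  then have "t * (2 * L) \<le> t * (D * t)" by (simp add: power2_eq_square algebra_simps)
  then have "2 * L \<le> D * t" using tpos by simp
  also have "D * t \<le> D * (L / (D + 1))" using tL Dnn by (intro mult_left_mono) auto
  also have "\<dots> \<le> L" using Dnn Lpos by (simp add: field_simps)
  finally show False using Lpos by simp
qed


end
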